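(* Let $m,k,t$ be positive integers with $t<(m-1)/4$, let $C=\{2i\mid 2\leq i\leq t\}\cup\{1,2t+1\}$, and let $c(x)=1+\sum_{j\in C}(x^j+x^{m-j})\in\mathbb{F}_2[x]$. Then $\gcd(c(x^k),x^m-1)=1$ if and only if $\gcd(m,(2t+3)k)=\gcd(m,(2t-1)k)=\gcd(m,3k)=\gcd(m,k)$.
   Context: All polynomials are over $\mathbb{F}_2$. *)

theory Defs
  imports "HOL-Computational_Algebra.Computational_Algebra" "Berlekamp_Zassenhaus.Finite_Field"
begin

type_synonym GF2 = "bool mod_ring"

text \<open>Polynomials over F_2 are represented as GF2 poly , i.e. polynomials over Z/2Z with bool as the 2-element index type (CARD(bool) = 2).\<close>

definition C_set :: "nat \<Rightarrow> nat set" where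
  "C_set t = {2 * i | i. 2 \<le> i \<and> i \<le> t} \<union> {1, 2 * t + 1}"

definition c_poly :: "nat \<Rightarrow> nat \<Rightarrow> GF2 poly" where
  "c_poly m t = 1 + (\<Sum>j\<in>C_set t. Polynomial.monom 1 j + Polynomial.monom 1 (m - j))"

end

theory Submission
  imports Defs
begin

lemma two0: "(1::GF2) + 1 = 0"
proof -
  have "(of_nat (CARD(bool)) :: GF2) = 0" by (rule of_nat_card_eq_0)
  thus ?thesis by simp
qed

lemma two0p: "(1::GF2 poly) + 1 = 0"
  by (metis one_pCons add_pCons two0 pCons_0_0 add_0)

lemma two0': "(2::GF2 poly) = 0" using two0p by (simp only: one_add_one)

lemma add_self: "(p::GF2 poly) + p = 0"
proof -
  have "p + p = (1 + 1) * p" by (simp add: distrib_right)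
  also have "... = 0" by (simp only: two0p mult_zero_left)
  finally show ?thesis .
qed

lemma uminus_GF2 [simp]: "- (p::GF2 poly) = p"
  by (metis add_self add.inverse_unique)

lemma diff_GF2: "(p::GF2 poly) - q = p + q"
  by (metis diff_conv_add_uminus uminus_GF2)

lemma alg_id:
  fixes z w :: "GF2 poly"
  shows "(1+z^2)*(z^3*w + z^4*w + z^2*w + z^6*w^2 + 1) + (z^7*w + z^7*w^2) + (z + z*w)
     = (1+z+z^2)*(1+z*w)*(1+z^5*w)"
proof -
  have "(1+z^2)*(z^3*w + z^4*w + z^2*w + z^6*w^2 + 1) + (z^7*w + z^7*w^2) + (z + z*w)
     = (1+z+z^2)*(1+z*w)*(1+z^5*w) + (z^4*w + z^4*w)"
    by (simp add: algebra_simps eval_nat_numeral)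
  thus ?thesis by (simp add: add_self)
qed


lemma pow_diff_dvd:
  fixes z :: "'a::comm_ring_1"
  assumes "a dvd b" shows "z^a - 1 dvd z^b - 1"
proof -
  obtain c where b: "b = a*c" using assms by auto
  have "z^b - 1 = (z^a)^c - 1" by (simp add: b power_mult)
  also have "\<dots> = (z^a - 1) * (\<Sum>i<c. (z^a)^i)" by (rule power_diff_1_eq)
  finally show ?thesis by simp
qed

lemma gcd_pow_dvd:
  fixes z :: "'a::comm_ring_1"
  shows "p dvd z^a - 1 \<Longrightarrow> p dvd z^b - 1 \<Longrightarrow> p dvd z^(gcd a b) - 1"
proof (induction a b rule: gcd_nat_induct)
  case (base m) then show ?case by simp
next
  case (step m n)
  have e: "z^m - 1 = z^(m mod n) * (z^(n*(m div n)) - 1) + (z^(m mod n) - 1)"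
  proof -
    have "z^m = z^(m mod n) * z^(n*(m div n))"
      by (metis mod_mult_div_eq power_add)
    thus ?thesis by (simp add: algebra_simps)
  qed
  have "p dvd z^(n*(m div n)) - 1"
    using step.prems(2) pow_diff_dvd[of n "n*(m div n)" z] dvd_trans by auto
  hence "p dvd z^(m mod n) - 1" using step.prems(1) e
    by (metis dvd_add_right_iff dvd_mult)
  hence "p dvd z^(gcd n (m mod n)) - 1" using step.IH step.prems(2) by blast
  thus ?case using gcd_non_0_nat[of n m] step.hyps by simp
qed

lemma pcompose_monom1: "pcompose (Polynomial.monom (1::'a::comm_ring_1) j) q = q^j"
proof -
  have "pcompose ([:0,1:]^j) q = q^j" by (induction j) (simp_all add: pcompose_mult pcompose_pCons pcompose_1)
  thus ?thesis by (simp add: monom_altdef)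
qed

lemma C_set_eq: "C_set t = (\<lambda>i. 2*i) ` {2..t} \<union> {1, 2*t+1}"
  by (auto simp: C_set_def)

lemma C_le: "j \<in> C_set t \<Longrightarrow> j \<le> 2*t+1"
  by (auto simp: C_set_def)

lemma sum_C:
  assumes "t > 0"
  shows "sum f (C_set t) = (\<Sum>i\<in>{2..t}. f (2*i)) + (f 1 + f (2*t+1))"
proof -
  have d: "(\<lambda>i. 2*i) ` {2..t} \<inter> {1, 2*t+1} = {}" by (auto; presburger)
  have inj: "inj_on (\<lambda>i::nat. 2*i) {2..t}" by (auto simp: inj_on_def)
  have "sum f (C_set t) = sum f ((\<lambda>i. 2*i) ` {2..t}) + sum f {1, 2*t+1}"
    unfolding C_set_eq by (rule sum.union_disjoint) (use d in auto)
  also have "sum f ((\<lambda>i. 2*i) ` {2..t}) = (\<Sum>i\<in>{2..t}. f (2*i))"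
    using sum.reindex[OF inj] by simp
  also have "sum f {1, 2*t+1} = f 1 + f (2*t+1)" using assms by simp
  finally show ?thesis .
qed

lemma cancel2: "(x::GF2 poly) + y + (y + w) = x + w"
  by (metis add.assoc add_self add.left_neutral)

lemma geo:
  fixes z :: "GF2 poly"
  shows "(1+z^2) * (\<Sum>l<n. z^(a+2*l)) = z^a + z^(a+2*n)"
proof (induction n)
  case 0 then show ?case by (simp add: add_self)
next
  case (Suc n)
  have "(1+z^2) * (\<Sum>l<Suc n. z^(a+2*l)) = (1+z^2) * (\<Sum>l<n. z^(a+2*l)) + (z^(a+2*n) + z^(a+2*Suc n))"
    by (simp add: algebra_simps power_add power2_eq_square)
  also have "\<dots> = (z^a + z^(a+2*n)) + (z^(a+2*n) + z^(a+2*Suc n))"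
    by (simp only: Suc.IH)
  finally show ?case by (simp add: cancel2)
qed

lemma G1:
  assumes "t > 0"
  shows "(\<Sum>i\<in>{2..(t::nat)}. f (2*t+1+2*i)) = (\<Sum>l<t-1. f ((2*t+5) + 2*l))"
  by (rule sum.reindex_bij_witness[of _ "\<lambda>l. l+2" "\<lambda>i. i-2"]) (use assms in \<open>auto intro!: arg_cong[of _ _ f]\<close>)

lemma G2:
  assumes "t > 0"
  shows "(\<Sum>i\<in>{2..(t::nat)}. f (2*t+1-2*i)) = (\<Sum>l<t-1. f (1 + 2*l))"
  by (rule sum.reindex_bij_witness[of _ "\<lambda>l. t-l" "\<lambda>i. t-i"]) (use assms in \<open>auto intro!: arg_cong[of _ _ f]\<close>)


lemma P_id:
  fixes z :: "GF2 poly"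
  assumes t: "t > 0"
  shows "(1+z^2) * (z^(2*t+1) + (\<Sum>j\<in>C_set t. z^(2*t+1+j) + z^(2*t+1-j)))
       = (1+z+z^2)*(1+z^(2*t-1))*(1+z^(2*t+3))"
proof -
  have s1: "(\<Sum>j\<in>C_set t. z^(2*t+1+j) + z^(2*t+1-j)) =
     (\<Sum>i\<in>{2..t}. z^(2*t+1+2*i)) + (\<Sum>i\<in>{2..t}. z^(2*t+1-2*i)) + ((z^(2*t+2) + z^(2*t)) + (z^(4*t+2) + 1))"
  proof -
    have x1: "2*t+1+1 = 2*t+2" "2*t+1-1 = 2*t" "2*t+1+(2*t+1) = 4*t+2" "2*t+1-(2*t+1) = 0" by simp_all
    show ?thesis
      using sum_C[OF t, of "\<lambda>j. z^(2*t+1+j) + z^(2*t+1-j)"]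
      unfolding x1 power_0 sum.distrib by simp
  qed
  have s2: "(\<Sum>i\<in>{2..t}. z^(2*t+1+2*i)) = (\<Sum>l<t-1. z^((2*t+5) + 2*l))"
    using G1[OF t, of "power z"] .
  have s3: "(\<Sum>i\<in>{2..t}. z^(2*t+1-2*i)) = (\<Sum>l<t-1. z^(1 + 2*l))"
    using G2[OF t, of "power z"] .
  have "(1+z^2) * (z^(2*t+1) + (\<Sum>j\<in>C_set t. z^(2*t+1+j) + z^(2*t+1-j)))
      = (1+z^2) * (z^(2*t+1) + z^(2*t+2) + z^(2*t) + z^(4*t+2) + 1)
        + (1+z^2) * (\<Sum>l<t-1. z^((2*t+5) + 2*l)) + (1+z^2) * (\<Sum>l<t-1. z^(1 + 2*l))"
    unfolding s1 s2 s3 by (simp add: algebra_simps)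
  also have "\<dots> = (1+z^2) * (z^(2*t+1) + z^(2*t+2) + z^(2*t) + z^(4*t+2) + 1)
      + (z^(2*t+5) + z^(2*t+5+2*(t-1))) + (z + z^(1+2*(t-1)))"
    by (simp only: geo power_one_right)
  finally have e: "(1+z^2) * (z^(2*t+1) + (\<Sum>j\<in>C_set t. z^(2*t+1+j) + z^(2*t+1-j)))
      = (1+z^2) * (z^(2*t+1) + z^(2*t+2) + z^(2*t) + z^(4*t+2) + 1)
      + (z^(2*t+5) + z^(2*t+5+2*(t-1))) + (z + z^(1+2*(t-1)))" .
  obtain s where ts: "t = Suc s" using t by (cases t) auto
  define w where "w = z^(2*s)"
  have p: "\<And>c. z^(2*s + c) = z^c * w" unfolding w_def by (simp add: power_add)
  have p2: "\<And>c. z^(2*s + 2*s + c) = z^c * w^2" unfolding w_def power_add power2_eq_square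
    by (simp add: ac_simps)
  have e1: "z^(2*t+1) = z^3*w"
  proof -
    have x: "2*t+1 = 2*s+3" using ts by simp
    show ?thesis by (simp only: x p power_one_right)
  qed
  have e2: "z^(2*t+2) = z^4*w"
  proof -
    have x: "2*t+2 = 2*s+4" using ts by simp
    show ?thesis by (simp only: x p power_one_right)
  qed
  have e3: "z^(2*t) = z^2*w"
  proof -
    have x: "2*t = 2*s+2" using ts by simp
    show ?thesis by (simp only: x p power_one_right)
  qed
  have e4: "z^(4*t+2) = z^6*w^2"
  proof -
    have x: "4*t+2 = 2*s+2*s+6" using ts by simp
    show ?thesis by (simp only: x p2)
  qed
  have e5: "z^(2*t+5) = z^7*w"
  proof -
    have x: "2*t+5 = 2*s+7" using ts by simp
    show ?thesis by (simp only: x p power_one_right)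
  qed
  have e6: "z^(2*t+5+2*(t-1)) = z^7*w^2"
  proof -
    have x: "2*t+5+2*(t-1) = 2*s+2*s+7" using ts by simp
    show ?thesis by (simp only: x p2)
  qed
  have e7: "z^(1+2*(t-1)) = z*w"
  proof -
    have x: "1+2*(t-1) = 2*s+1" using ts by simp
    show ?thesis by (simp only: x p power_one_right)
  qed
  have e8: "z^(2*t-1) = z*w"
  proof -
    have x: "2*t-1 = 2*s+1" using ts by simp
    show ?thesis by (simp only: x p power_one_right)
  qed
  have e9: "z^(2*t+3) = z^5*w"
  proof -
    have x: "2*t+3 = 2*s+5" using ts by simp
    show ?thesis by (simp only: x p power_one_right)
  qed
  show ?thesis unfolding e unfolding e1 e2 e3 e4 e5 e6 e7 e8 e9 by (rule alg_id)
qed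


lemma Xpow: "([:0,1:]::GF2 poly)^n = Polynomial.monom 1 n"
  by (simp add: monom_altdef)

lemma deg_Xm1: "n > 0 \<Longrightarrow> degree (([:0,1:]::GF2 poly)^n - 1) = n"
  unfolding Xpow diff_GF2 by (subst degree_add_eq_left) (simp_all add: degree_monom_eq)

lemma Xm1_nz: "n > 0 \<Longrightarrow> ([:0,1:]::GF2 poly)^n - 1 \<noteq> 0"
  using deg_Xm1[of n] by auto

lemma of_nat_GF2: "(of_nat n :: GF2 poly) = (if even n then 0 else 1)"
proof -
  have two: "(2::GF2 poly) = 0" using two0p by (simp only: one_add_one)
  show ?thesis by (induction n) (auto simp: two0p add.commute two)
qed

lemma ex_prime: "\<not> coprime a (b::GF2 poly) \<Longrightarrow> b \<noteq> 0 \<Longrightarrow> \<exists>q. prime q \<and> q dvd a \<and> q dvd b"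
proof -
  assume nc: "\<not> coprime a b" and b: "b \<noteq> 0"
  have "gcd a b \<noteq> 0" using b by simp
  moreover have "\<not> is_unit (gcd a b)" using nc is_unit_gcd by blast
  ultimately obtain q where "q dvd gcd a b" "prime q" using prime_divisor_exists by blast
  thus ?thesis by auto
qed

lemma key_nat:
  fixes m k a :: nat
  assumes m: "m > 0" and a: "odd a" and ne: "gcd m (a*k) \<noteq> gcd m k"
  shows "\<exists>q::GF2 poly. prime q \<and> q dvd [:0,1:]^(a*k) - 1 \<and> q dvd [:0,1:]^m - 1
           \<and> \<not> q dvd [:0,1:]^(gcd m k) - 1"
proof -
  define X :: "GF2 poly" where "X = [:0,1:]"
  define d where "d = gcd m k"
  define e where "e = gcd m (a*k)"
  have d0: "d > 0" using m by (simp add: d_def)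
  have e0: "e > 0" using m by (simp add: e_def)
  have de: "d dvd e" unfolding d_def e_def by (simp add: dvd_mult)
  have "e dvd a*m" "e dvd a*k" unfolding e_def by (simp_all add: dvd_mult)
  hence "e dvd gcd (a*m) (a*k)" by simp
  hence ead: "e dvd a*d" unfolding d_def by (simp add: gcd_mult_distrib_nat)
  obtain r where r: "e = d*r" using de by auto
  have "r dvd a" using ead r d0 by (simp add: mult.commute)
  hence rodd: "odd r" using a by (meson dvd_trans)
  have r1: "r \<noteq> 1" using ne r unfolding d_def e_def by auto
  define u where "u = X^d"
  define S where "S = (\<Sum>i<r. u^i)"
  have eS: "X^e - 1 = (u - 1) * S" unfolding S_def u_def r by (simp add: power_mult power_diff_1_eq)
  have ne0: "X^e - 1 \<noteq> 0" using Xm1_nz[OF e0] X_def by simp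
  hence S0: "S \<noteq> 0" using eS by auto
  have u0: "u - 1 \<noteq> 0" using Xm1_nz[OF d0] X_def u_def by simp
  have Snu: "\<not> is_unit S"
  proof
    assume "is_unit S"
    hence "degree S = 0" using is_unit_iff_degree S0 by blast
    hence "degree (X^e - 1) = degree (u - 1)" using eS degree_mult_eq[OF u0 S0] by simp
    thus False using deg_Xm1[OF e0] deg_Xm1[OF d0] X_def u_def r r1 d0 e0 ne
      unfolding d_def e_def by simp
  qed
  obtain q where q: "prime q" "q dvd S" using prime_divisor_exists[OF S0 Snu] by blast
  have "S - 1 = (\<Sum>i<r. u^i - 1)"
    unfolding S_def sum_subtractf using rodd by (simp add: of_nat_GF2)
  hence uS: "u - 1 dvd S - 1" by (simp add: dvd_sum pow_diff_dvd[of 1 _ u, simplified])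
  have qe: "q dvd X^e - 1" using q eS by simp
  have "X^e - 1 dvd X^(a*k) - 1" by (rule pow_diff_dvd) (simp add: e_def)
  moreover have "X^e - 1 dvd X^m - 1" by (rule pow_diff_dvd) (simp add: e_def)
  moreover have "\<not> q dvd X^d - 1"
  proof
    assume "q dvd X^d - 1"
    hence "q dvd S - 1" using uS u_def dvd_trans by blast
    hence "q dvd S - (S - 1)" using q(2) dvd_diff by blast
    hence "is_unit q" by simp
    thus False using q(1) not_prime_unit by blast
  qed
  ultimately show ?thesis using q(1) qe dvd_trans unfolding X_def d_def by blast
qed


lemma cpc: "pcompose (c_poly m t) q = 1 + (\<Sum>j\<in>C_set t. q^j + q^(m-j))"
  by (simp add: c_poly_def pcompose_add pcompose_sum pcompose_1 pcompose_monom1)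

lemma F1:
  fixes y :: "'a::comm_ring_1"
  assumes "2*t+1 \<le> m"
  shows "y^(2*t+1) * (1 + (\<Sum>j\<in>C_set t. y^j + y^(m-j))) =
    (y^(2*t+1) + (\<Sum>j\<in>C_set t. y^(2*t+1+j) + y^(2*t+1-j))) + (y^m - 1) * (\<Sum>j\<in>C_set t. y^(2*t+1-j))"
proof -
  have t: "y^(2*t+1) * (y^j + y^(m-j)) = (y^(2*t+1+j) + y^(2*t+1-j)) + (y^m - 1) * y^(2*t+1-j)"
    if "j \<in> C_set t" for j
  proof -
    have j: "j \<le> 2*t+1" using C_le that .
    have x: "2*t+1+(m-j) = (2*t+1-j) + m" using j assms by simp
    have "y^(2*t+1) * y^(m-j) = y^(2*t+1-j) * y^m"
      unfolding power_add[symmetric] x ..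
    moreover have "y^(2*t+1) * y^j = y^(2*t+1+j)" by (simp add: power_add)
    ultimately show ?thesis by (simp add: algebra_simps)
  qed
  have "y^(2*t+1) * (1 + (\<Sum>j\<in>C_set t. y^j + y^(m-j))) =
      y^(2*t+1) + (\<Sum>j\<in>C_set t. y^(2*t+1) * (y^j + y^(m-j)))"
    by (simp add: algebra_simps sum_distrib_left)
  also have "\<dots> = y^(2*t+1) + (\<Sum>j\<in>C_set t. (y^(2*t+1+j) + y^(2*t+1-j)) + (y^m - 1) * y^(2*t+1-j))"
    using t by simp
  also have "\<dots> = y^(2*t+1) + ((\<Sum>j\<in>C_set t. y^(2*t+1+j) + y^(2*t+1-j)) + (y^m - 1) * (\<Sum>j\<in>C_set t. y^(2*t+1-j)))"
    by (simp only: sum.distrib sum_distrib_left)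
  finally show ?thesis by (simp only: add.assoc)
qed

lemma F3: "(y::GF2 poly) - 1 dvd (\<Sum>j\<in>C_set t. y^j + y^(m-j))"
proof (rule dvd_sum)
  fix j
  have eq: "y^j + y^(m-j) = (y^j - 1) + (y^(m-j) - 1)"
    by (simp add: diff_GF2 algebra_simps add_self two0')
  have d1: "y - 1 dvd y^j - 1" "y - 1 dvd y^(m-j) - 1"
    using pow_diff_dvd[of 1 j y] pow_diff_dvd[of 1 "m-j" y] by simp_all
  show "y - 1 dvd y^j + y^(m-j)" unfolding eq by (rule dvd_add[OF d1])
qed

lemma cube: "(1+y)*(1+y+y^2) = 1 + (y::GF2 poly)^3"
proof -
  have "(1+y)*(1+y+y^2) = 1 + y^3 + ((y+y) + (y^2+y^2))"
    by (simp add: algebra_simps eval_nat_numeral)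
  thus ?thesis by (simp add: add_self)
qed

lemma sq: "1 + (y::GF2 poly)^2 = (y - 1) * (y - 1)"
proof -
  have "(y - 1) * (y - 1) = 1 + y^2 + (y + y)"
    by (simp add: diff_GF2 algebra_simps eval_nat_numeral)
  thus ?thesis by (simp add: add_self)
qed


theorem proposition10:
  fixes m k t :: nat
  assumes "0 < m" and "0 < k" and "0 < t"
    and "real t < (real m - 1) / 4"
  shows "gcd (pcompose (c_poly m t) (Polynomial.monom 1 k)) (Polynomial.monom 1 m - 1) = 1 \<longleftrightarrow>
         (gcd m ((2 * t + 3) * k) = gcd m k \<and> gcd m ((2 * t - 1) * k) = gcd m k
          \<and> gcd m (3 * k) = gcd m k)"
proof -
  note m0 = assms(1) and k0 = assms(2) and t0 = assms(3)
  define X :: "GF2 poly" where "X = [:0,1:]"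
  have mon: "\<And>n. Polynomial.monom (1::GF2) n = X^n" by (simp add: X_def Xpow)
  define y where "y = X^k"
  define M where "M = X^m - 1"
  define N where "N = 2*t+1"
  have "real (4*t+1) < real m" using assms(4) by simp
  hence Nm: "N \<le> m" unfolding N_def by linarith
  define c' where "c' = 1 + (\<Sum>j\<in>C_set t. y^j + y^(m-j))"
  have c'_eq: "pcompose (c_poly m t) (Polynomial.monom 1 k) = c'"
    unfolding c'_def cpc mon y_def ..
  define P where "P = y^N + (\<Sum>j\<in>C_set t. y^(N+j) + y^(N-j))"
  have Pid: "(1+y^2)*P = (1+y+y^2)*(1+y^(2*t-1))*(1+y^(2*t+3))"
    unfolding P_def N_def by (rule P_id[OF t0])
  have M0: "M \<noteq> 0" unfolding M_def X_def using Xm1_nz[OF m0] .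
  have MdvdP: "M dvd y^N*c' - P"
  proof -
    have "y^N*c' - P = (y^m - 1) * (\<Sum>j\<in>C_set t. y^(N-j))"
      using F1[OF Nm[unfolded N_def], of y] unfolding c'_def P_def N_def by simp
    moreover have "M dvd y^m - 1"
      unfolding M_def y_def power_mult[symmetric] by (rule pow_diff_dvd) simp
    ultimately show ?thesis by simp
  qed
  have key: "q dvd y^N*c' \<longleftrightarrow> q dvd P" if "q dvd M" for q
  proof
    assume "q dvd y^N*c'"
    moreover have "q dvd y^N*c' - P" using that MdvdP dvd_trans by blast
    ultimately have "q dvd y^N*c' - (y^N*c' - P)" using dvd_diff by blast
    thus "q dvd P" by simp
  next
    assume "q dvd P"
    moreover have "q dvd y^N*c' - P" using that MdvdP dvd_trans by blast
    ultimately have "q dvd P + (y^N*c' - P)" using dvd_add by blast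
    thus "q dvd y^N*c'" by simp
  qed
  have notX: "\<not> q dvd y^N" if q: "prime q" "q dvd M" for q
  proof
    assume "q dvd y^N"
    hence "q dvd y" using q(1) prime_dvd_power by blast
    hence "q dvd X" unfolding y_def using q(1) prime_dvd_power by blast
    hence "q dvd X^m" using m0 dvd_power[of m X] dvd_trans by blast
    hence "q dvd X^m - M" using q(2) dvd_diff by blast
    hence "is_unit q" unfolding M_def by simp
    thus False using q(1) not_prime_unit by blast
  qed
  have F3': "y - 1 dvd c' - 1" unfolding c'_def using F3 by simp
  have ypow: "1 + y^a = X^(a*k) - 1" for a
    unfolding y_def power_mult[symmetric] by (simp add: diff_GF2 add.commute mult.commute)
  have from_y1: "q dvd X^(gcd m k) - 1" if "q dvd M" "q dvd y - 1" for q
    using gcd_pow_dvd[of q X m k] that unfolding M_def y_def by simp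
  have to_y1: "q dvd y - 1" if "q dvd X^(gcd m k) - 1" for q
  proof -
    have "X^(gcd m k) - 1 dvd X^k - 1" by (rule pow_diff_dvd) simp
    thus ?thesis using that dvd_trans unfolding y_def by blast
  qed
  have gcd1: "gcd c' M = 1 \<longleftrightarrow> coprime c' M" by (simp add: coprime_iff_gcd_eq_1)
  show ?thesis
    unfolding c'_eq mon[of m] M_def[symmetric] gcd1
  proof
    assume cop: "coprime c' M"
    have gen: "gcd m (a*k) = gcd m k"
      if a: "odd a" and h: "\<And>q. prime q \<Longrightarrow> q dvd 1 + y^a \<Longrightarrow> \<not> q dvd y - 1 \<Longrightarrow> q dvd (1+y^2)*P" for a
    proof (rule ccontr)
      assume "gcd m (a*k) \<noteq> gcd m k"
      then obtain q where q: "prime q" "q dvd X^(a*k) - 1" "q dvd M" "\<not> q dvd X^(gcd m k) - 1"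
        using key_nat[OF m0 a] unfolding X_def M_def by blast
      have ny: "\<not> q dvd y - 1" using from_y1 q by blast
      have "q dvd 1 + y^a" using q(2) unfolding ypow[symmetric] .
      hence "q dvd (1+y^2)*P" using h[OF q(1) _ ny] by blast
      moreover have "\<not> q dvd 1 + y^2" unfolding sq using ny q(1) prime_dvd_mult_iff by blast
      ultimately have "q dvd P" using q(1) prime_dvd_mult_iff by blast
      hence "q dvd y^N*c'" using key q(3) by blast
      hence "q dvd c'" using notX[OF q(1) q(3)] q(1) prime_dvd_mult_iff by blast
      hence "is_unit q" using cop q(3) coprime_common_divisor by blast
      thus False using q(1) not_prime_unit by blast
    qed
    have A: "gcd m ((2*t+3)*k) = gcd m k"
      by (rule gen) (simp_all add: Pid)
    have B: "gcd m ((2*t-1)*k) = gcd m k"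
      by (rule gen) (use t0 in \<open>simp_all add: Pid\<close>)
    have C: "gcd m (3*k) = gcd m k"
    proof (rule gen)
      fix q :: "GF2 poly"
      assume q: "prime q" "q dvd 1 + y^3" "\<not> q dvd y - 1"
      have "\<not> q dvd 1 + y" using q(3) by (simp add: diff_GF2 add.commute)
      hence "q dvd 1+y+y^2" using q(1,2) cube[of y] prime_dvd_mult_iff by metis
      thus "q dvd (1+y^2)*P" unfolding Pid by simp
    qed simp
    show "gcd m ((2*t+3)*k) = gcd m k \<and> gcd m ((2*t-1)*k) = gcd m k \<and> gcd m (3*k) = gcd m k"
      using A B C by simp
  next
    assume conds: "gcd m ((2*t+3)*k) = gcd m k \<and> gcd m ((2*t-1)*k) = gcd m k \<and> gcd m (3*k) = gcd m k"
    show "coprime c' M"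
    proof (rule ccontr)
      assume "\<not> coprime c' M"
      then obtain q where q: "prime q" "q dvd c'" "q dvd M" using ex_prime M0 by blast
      have "q dvd y^N*c'" using q(2) by simp
      hence "q dvd P" using key q(3) by blast
      hence "q dvd (1+y+y^2)*(1+y^(2*t-1))*(1+y^(2*t+3))" unfolding Pid[symmetric] by simp
      hence "\<exists>a. gcd m (a*k) = gcd m k \<and> q dvd 1 + y^a"
      proof (elim prime_dvd_multD[OF q(1), elim_format] disjE)
        assume "q dvd 1+y+y^2"
        hence "q dvd 1 + y^3" unfolding cube[symmetric] by simp
        thus ?thesis using conds by blast
      next
        assume "q dvd 1 + y^(2*t-1)" thus ?thesis using conds by blast
      next
        assume "q dvd 1 + y^(2*t+3)" thus ?thesis using conds by blast
      qed
      then obtain a where a: "gcd m (a*k) = gcd m k" "q dvd X^(a*k) - 1" using ypow by auto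
      have "q dvd X^(gcd m (a*k)) - 1"
        using gcd_pow_dvd[of q X m "a*k"] a(2) q(3) unfolding M_def by simp
      hence "q dvd y - 1" using to_y1 a(1) by simp
      hence "q dvd c' - 1" using F3' dvd_trans by blast
      hence "q dvd c' - (c' - 1)" using q(2) dvd_diff by blast
      hence "is_unit q" by simp
      thus False using q(1) not_prime_unit by blast
    qed
  qed
qed

end
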